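(* Let $m\ge 2$ and $d\ge 1$ be integers with $n=md\ge 3$, and let $a,c>0$. Let $\Gamma'$ be the non-complete wheel $(n,m)$-$W$: its vertex set is $\{1,\dots,n+1\}$; for $i=1,\dots,n$ the vertices $i$ and $i+1$ (indices of the cycle taken modulo $n$, so $n$ is joined to $1$) are joined by an edge of conductance $c$; and the vertex $n+1$ is joined to each of the vertices $1+(k-1)d$, $k=1,\dots,m$, by an edge of conductance $a$. Put $q=\frac{ad}{2c}+1$. Then the Kirchhoff index of $\Gamma'$ is $$K(\Gamma')=-\frac{1}{2c}\,\frac{n+1}{T_m(q)-1}\left[\left(\frac{an}{6c}-dn+d^2\right)U_{m-1}(q)+\left(\frac{2cd}{a}+\frac{dn}{3}\right)\bigl(V_{m-1}(q)-1\bigr)\right]+\frac{d}{a}+\frac{dn(n+1)}{6c}-\frac{(d^2-1)n}{12c}.$$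
   Context: The (combinatorial) Laplacian of a network with vertex set $\{1,\dots,N\}$ and conductances $c_{ij}>0$ on its edges is the $N\times N$ matrix $L$ with $L_{ii}=\sum_k c_{ik}$ and $L_{ij}=-c_{ij}$ for $i\ne j$ ($c_{ij}=0$ if $\{i,j\}$ is not an edge). Let $G'$ be the group inverse of the Laplacian of $\Gamma'$. The effective resistance between vertices $i,j$ is $R(i,j)=G'_{ii}+G'_{jj}-2G'_{ij}$, and the Kirchhoff index is $K(\Gamma')=\frac12\sum_{i,j}R(i,j)$ (equivalently $(n+1)\,\mathrm{trace}(G')$). $T_k$ and $U_k$ denote the Chebyshev polynomials of the first and second kind ($T_0=1$, $T_1=x$, $U_0=1$, $U_1=2x$, both satisfying $p_{k+1}=2xp_k-p_{k-1}$), and $V_k$ denotes the Chebyshev polynomials of the third kind: $V_0=1$, $V_1=2x-1$, $V_{k+1}=2xV_k-V_{k-1}$. *)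

theory Defs
  imports Complex_Main
begin

fun chebT :: "nat \<Rightarrow> real \<Rightarrow> real" where
  "chebT 0 x = 1"
| "chebT (Suc 0) x = x"
| "chebT (Suc (Suc k)) x = 2 * x * chebT (Suc k) x - chebT k x"

fun chebU :: "nat \<Rightarrow> real \<Rightarrow> real" where
  "chebU 0 x = 1"
| "chebU (Suc 0) x = 2 * x"
| "chebU (Suc (Suc k)) x = 2 * x * chebU (Suc k) x - chebU k x"

fun chebV :: "nat \<Rightarrow> real \<Rightarrow> real" where
  "chebV 0 x = 1"
| "chebV (Suc 0) x = 2 * x - 1"
| "chebV (Suc (Suc k)) x = 2 * x * chebV (Suc k) x - chebV k x"

definition mat_mult :: "nat \<Rightarrow> (nat \<Rightarrow> nat \<Rightarrow> real) \<Rightarrow> (nat \<Rightarrow> nat \<Rightarrow> real) \<Rightarrow> nat \<Rightarrow> nat \<Rightarrow> real" where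
  "mat_mult N A B i j = (\<Sum>k\<in>{1..N}. A i k * B k j)"

text \<open>Combinatorial Laplacian of a network on {1..N} with conductance function cond
  (cond i j = 0 if {i,j} is not an edge).\<close>
definition laplacian :: "nat \<Rightarrow> (nat \<Rightarrow> nat \<Rightarrow> real) \<Rightarrow> nat \<Rightarrow> nat \<Rightarrow> real" where
  "laplacian N cond i j =
     (if i \<in> {1..N} \<and> j \<in> {1..N} then
        (if i = j then (\<Sum>k\<in>{1..N} - {i}. cond i k) else - cond i j)
      else 0)"

definition is_group_inverse :: "nat \<Rightarrow> (nat \<Rightarrow> nat \<Rightarrow> real) \<Rightarrow> (nat \<Rightarrow> nat \<Rightarrow> real) \<Rightarrow> bool" where
  "is_group_inverse N L G \<longleftrightarrow>
     (\<forall>i j. \<not> (i \<in> {1..N} \<and> j \<in> {1..N}) \<longrightarrow> G i j = 0) \<and>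
     (\<forall>i\<in>{1..N}. \<forall>j\<in>{1..N}.
        mat_mult N (mat_mult N L G) L i j = L i j \<and>
        mat_mult N (mat_mult N G L) G i j = G i j \<and>
        mat_mult N L G i j = mat_mult N G L i j)"

definition group_inverse :: "nat \<Rightarrow> (nat \<Rightarrow> nat \<Rightarrow> real) \<Rightarrow> nat \<Rightarrow> nat \<Rightarrow> real" where
  "group_inverse N L = (THE G. is_group_inverse N L G)"

definition eff_resistance :: "nat \<Rightarrow> (nat \<Rightarrow> nat \<Rightarrow> real) \<Rightarrow> nat \<Rightarrow> nat \<Rightarrow> real" where
  "eff_resistance N cond i j =
     (let G = group_inverse N (laplacian N cond) in G i i + G j j - 2 * G i j)"

definition kirchhoff_index :: "nat \<Rightarrow> (nat \<Rightarrow> nat \<Rightarrow> real) \<Rightarrow> real" where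
  "kirchhoff_index N cond = (1/2) * (\<Sum>i\<in>{1..N}. \<Sum>j\<in>{1..N}. eff_resistance N cond i j)"

definition wheel_cond :: "nat \<Rightarrow> nat \<Rightarrow> real \<Rightarrow> real \<Rightarrow> nat \<Rightarrow> nat \<Rightarrow> real" where
  "wheel_cond m d a c i j =
     (let n = m * d;
          cyc = (\<lambda>i j. i \<in> {1..n} \<and> j \<in> {1..n} \<and>
                   (j = i + 1 \<or> i = j + 1 \<or> (i = n \<and> j = 1) \<or> (i = 1 \<and> j = n)));
          spokes = {1 + (k - 1) * d | k. k \<in> {1..m}}
      in if cyc i j then c
         else if (i = n + 1 \<and> j \<in> spokes) \<or> (j = n + 1 \<and> i \<in> spokes) then a
         else 0)"

end

theory Submission
  imports Defs
begin


lemma mat_mult_assoc: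
  "mat_mult N (mat_mult N A B) C i j = mat_mult N A (mat_mult N B C) i j"
  unfolding mat_mult_def
  by (simp add: sum_distrib_left sum_distrib_right mult.assoc) (rule sum.swap)

definition eqon :: "nat \<Rightarrow> (nat \<Rightarrow> nat \<Rightarrow> real) \<Rightarrow> (nat \<Rightarrow> nat \<Rightarrow> real) \<Rightarrow> bool" where
  "eqon N X Y \<longleftrightarrow> (\<forall>i\<in>{1..N}. \<forall>j\<in>{1..N}. X i j = Y i j)"

lemma eqon_trans[trans]: "eqon N X Y \<Longrightarrow> eqon N Y Z \<Longrightarrow> eqon N X Z"
  by (auto simp: eqon_def)
lemma eqon_sym: "eqon N X Y \<Longrightarrow> eqon N Y X"
  by (auto simp: eqon_def)
lemma eqon_eq: "X = Y \<Longrightarrow> eqon N X Y"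
  by (auto simp: eqon_def)
lemma eqon_assoc: "eqon N (mat_mult N (mat_mult N A B) C) (mat_mult N A (mat_mult N B C))"
  by (simp add: eqon_def mat_mult_assoc)
lemma eqon_assoc': "eqon N (mat_mult N A (mat_mult N B C)) (mat_mult N (mat_mult N A B) C)"
  by (simp add: eqon_def mat_mult_assoc)
lemma mm_cong_left: "eqon N X X' \<Longrightarrow> eqon N (mat_mult N X Y) (mat_mult N X' Y)"
  unfolding eqon_def mat_mult_def by (auto intro!: sum.cong)
lemma mm_cong_right: "eqon N Y Y' \<Longrightarrow> eqon N (mat_mult N X Y) (mat_mult N X Y')"
  unfolding eqon_def mat_mult_def by (auto intro!: sum.cong)

lemma gi_facts:
  assumes "is_group_inverse N L G"
  shows "eqon N (mat_mult N (mat_mult N L G) L) L"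
    "eqon N (mat_mult N (mat_mult N G L) G) G"
    "eqon N (mat_mult N L G) (mat_mult N G L)"
  using assms by (auto simp: is_group_inverse_def eqon_def)

lemma gi_aux:
  assumes g1: "is_group_inverse N L G1" and g2: "is_group_inverse N L G2"
  shows "eqon N (mat_mult N G1 L) (mat_mult N L G2)"
proof -
  note A1 = gi_facts[OF g1] and A2 = gi_facts[OF g2]
  have "eqon N (mat_mult N G1 L) (mat_mult N G1 (mat_mult N (mat_mult N L G2) L))"
    by (rule mm_cong_right, rule eqon_sym, rule A2(1))
  also have "eqon N \<dots> (mat_mult N G1 (mat_mult N L (mat_mult N G2 L)))"
    by (rule mm_cong_right, rule eqon_assoc)
  also have "eqon N \<dots> (mat_mult N (mat_mult N G1 L) (mat_mult N G2 L))"
    by (rule eqon_assoc')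
  also have "eqon N \<dots> (mat_mult N (mat_mult N L G1) (mat_mult N G2 L))"
    by (rule mm_cong_left, rule eqon_sym, rule A1(3))
  also have "eqon N \<dots> (mat_mult N (mat_mult N L G1) (mat_mult N L G2))"
    by (rule mm_cong_right, rule eqon_sym, rule A2(3))
  also have "eqon N \<dots> (mat_mult N (mat_mult N (mat_mult N L G1) L) G2)"
    by (rule eqon_assoc')
  also have "eqon N \<dots> (mat_mult N L G2)"
    by (rule mm_cong_left, rule A1(1))
  finally show ?thesis .
qed

lemma gi_unique:
  assumes g1: "is_group_inverse N L G1" and g2: "is_group_inverse N L G2"
  shows "G1 = G2"
proof -
  note A1 = gi_facts[OF g1] and A2 = gi_facts[OF g2]
  have X: "eqon N (mat_mult N G1 L) (mat_mult N G2 L)"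
    using gi_aux[OF g1 g2] A2(3) by (rule eqon_trans)
  have "eqon N G1 (mat_mult N (mat_mult N G1 L) G1)" by (rule eqon_sym, rule A1(2))
  also have "eqon N \<dots> (mat_mult N (mat_mult N G2 L) G1)" by (rule mm_cong_left, rule X)
  also have "eqon N \<dots> (mat_mult N G2 (mat_mult N L G1))" by (rule eqon_assoc)
  also have "eqon N \<dots> (mat_mult N G2 (mat_mult N G1 L))" by (rule mm_cong_right, rule A1(3))
  also have "eqon N \<dots> (mat_mult N G2 (mat_mult N L G2))" by (rule mm_cong_right, rule gi_aux[OF g1 g2])
  also have "eqon N \<dots> (mat_mult N (mat_mult N G2 L) G2)" by (rule eqon_assoc')
  also have "eqon N \<dots> G2" by (rule A2(2))
  finally have E: "eqon N G1 G2" .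
  show ?thesis
  proof (intro ext)
    fix i j show "G1 i j = G2 i j"
      using E g1 g2 by (cases "i \<in> {1..N} \<and> j \<in> {1..N}") (auto simp: eqon_def is_group_inverse_def)
  qed
qed

lemma group_inverse_eq: "is_group_inverse N L G \<Longrightarrow> group_inverse N L = G"
  unfolding group_inverse_def by (rule the_equality) (auto intro: gi_unique)


lemma lap_sym: "(\<And>i j. cond i j = cond j i) \<Longrightarrow> laplacian N cond i j = laplacian N cond j i"
  by (auto simp: laplacian_def)

lemma lap_rowsum:
  assumes "i \<in> {1..N}" shows "(\<Sum>j\<in>{1..N}. laplacian N cond i j) = 0"
proof -
  have "(\<Sum>j\<in>{1..N}. laplacian N cond i j) = laplacian N cond i i + (\<Sum>j\<in>{1..N}-{i}. laplacian N cond i j)"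
    using assms by (simp add: sum.remove)
  also have "(\<Sum>j\<in>{1..N}-{i}. laplacian N cond i j) = (\<Sum>j\<in>{1..N}-{i}. - cond i j)"
    using assms by (intro sum.cong) (auto simp: laplacian_def)
  finally show ?thesis using assms by (simp add: laplacian_def sum_negf)
qed

lemma sum_delta_mult: "finite A \<Longrightarrow> (\<Sum>l\<in>A. (if l = i then 1 else 0) * (f l::real)) = (if i \<in> A then f i else 0)"
  by (simp add: if_distrib[of "\<lambda>x. x * _"] sum.delta' cong: if_cong)

lemma sum_delta_mult': "finite A \<Longrightarrow> (\<Sum>l\<in>A. (f l::real) * (if l = i then 1 else 0)) = (if i \<in> A then f i else 0)"
  by (simp add: if_distrib[of "\<lambda>x. _ * x"] sum.delta' cong: if_cong)

lemma sum_delta_mult2: "finite A \<Longrightarrow> (\<Sum>l\<in>A. (if i = l then 1 else 0) * (f l::real)) = (if i \<in> A then f i else 0)"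
  by (simp add: if_distrib[of "\<lambda>x. x * _"] sum.delta cong: if_cong)

lemma kirchhoff_reduced:
  fixes n :: nat and cond M :: "nat \<Rightarrow> nat \<Rightarrow> real" and x :: "nat \<Rightarrow> real"
  assumes sym: "\<And>i j. cond i j = cond j i"
  and inv: "\<And>i j. i \<in> {1..n} \<Longrightarrow> j \<in> {1..n} \<Longrightarrow>
       (\<Sum>k\<in>{1..n}. laplacian (n+1) cond i k * M k j) = (if i = j then 1 else 0)"
  and xs: "\<And>i. i \<in> {1..n} \<Longrightarrow> (\<Sum>k\<in>{1..n}. laplacian (n+1) cond i k * x k) = 1"
  shows "kirchhoff_index (n+1) cond = real (n+1) * (\<Sum>i\<in>{1..n}. M i i) - (\<Sum>i\<in>{1..n}. x i)"
proof -
  define N where "N = n+1"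
  define L where "L = laplacian N cond"
  have NS: "{1..N} = insert N {1..n}" "N \<notin> {1..n}" by (auto simp: N_def)
  have Npos: "real N > 0" by (simp add: N_def)
  have Nn: "\<not> N \<le> n" by (simp add: N_def)
  have Lsym: "\<And>i j. L i j = L j i" using sym by (simp add: L_def lap_sym)
  have row: "\<And>i. i\<in>{1..N} \<Longrightarrow> (\<Sum>j\<in>{1..N}. L i j) = 0" unfolding L_def by (rule lap_rowsum)
  have col: "\<And>j. j\<in>{1..N} \<Longrightarrow> (\<Sum>i\<in>{1..N}. L i j) = 0" using row Lsym by simp
  have inv': "\<And>i j. i \<in> {1..n} \<Longrightarrow> j \<in> {1..n} \<Longrightarrow>
       (\<Sum>k\<in>{1..n}. L i k * M k j) = (if i = j then 1 else 0)"
    using inv by (simp add: L_def N_def)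
  have xs': "\<And>i. i \<in> {1..n} \<Longrightarrow> (\<Sum>k\<in>{1..n}. L i k * x k) = 1"
    using xs by (simp add: L_def N_def)
  have Msym: "M i j = M j i" if i: "i\<in>{1..n}" and j: "j\<in>{1..n}" for i j
  proof -
    have lt: "(\<Sum>k\<in>{1..n}. M k i * L k l) = (if l = i then 1 else 0)" if "l\<in>{1..n}" for l
      using inv'[OF that i] Lsym by (simp add: mult.commute)
    have "M i j = (\<Sum>l\<in>{1..n}. (if l = i then 1 else 0) * M l j)"
      using i by (simp add: sum_delta_mult)
    also have "\<dots> = (\<Sum>l\<in>{1..n}. (\<Sum>k\<in>{1..n}. M k i * L k l) * M l j)"
      using lt by simp
    also have "\<dots> = (\<Sum>k\<in>{1..n}. M k i * (\<Sum>l\<in>{1..n}. L k l * M l j))"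
      by (simp add: sum_distrib_left sum_distrib_right mult.assoc) (rule sum.swap)
    also have "\<dots> = (\<Sum>k\<in>{1..n}. M k i * (if k = j then 1 else 0))"
      using inv' j by simp
    also have "\<dots> = M j i" using j by (simp add: sum_delta_mult')
    finally show ?thesis .
  qed
  define M' where "M' i j = (if i\<in>{1..n} \<and> j\<in>{1..n} then M i j else 0)" for i j
  have M'sym: "M' i j = M' j i" for i j using Msym by (auto simp: M'_def)
  define r where "r i = (\<Sum>j\<in>{1..N}. M' i j)" for i
  define S where "S = (\<Sum>i\<in>{1..N}. r i)"
  define G where "G i j = (if i\<in>{1..N} \<and> j\<in>{1..N} then M' i j - r i / N - r j / N + S / N^2 else 0)" for i j
  have LM': "(\<Sum>k\<in>{1..N}. L i k * M' k j) = (if i = j then 1 else 0) - (if i = N then 1 else 0)"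
    if i: "i\<in>{1..N}" and j: "j\<in>{1..N}" for i j
  proof -
    have e: "(\<Sum>k\<in>{1..N}. L i k * M' k j) = (\<Sum>k\<in>{1..n}. L i k * M' k j)"
      using NS Nn by (simp add: M'_def)
    show ?thesis
    proof (cases "j = N")
      case True
      then show ?thesis using e NS Nn by (simp add: M'_def)
    next
      case False
      then have jn: "j \<in> {1..n}" using j NS by auto
      have e2: "(\<Sum>k\<in>{1..n}. L i k * M' k j) = (\<Sum>k\<in>{1..n}. L i k * M k j)"
        using jn by (intro sum.cong) (auto simp: M'_def)
      show ?thesis
      proof (cases "i = N")
        case False
        then have "i \<in> {1..n}" using i NS by auto
        then show ?thesis using e e2 inv' jn \<open>i \<noteq> N\<close> by simp
      next
        case True
        have LN: "L N k = - (\<Sum>i'\<in>{1..n}. L i' k)" if "k \<in> {1..n}" for k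
        proof -
          have "k \<in> {1..N}" using that NS by auto
          from col[OF this] show ?thesis using NS by simp
        qed
        have "(\<Sum>k\<in>{1..n}. L N k * M k j) = - (\<Sum>k\<in>{1..n}. \<Sum>i'\<in>{1..n}. L i' k * M k j)"
          using LN by (simp add: sum_distrib_right sum_negf)
        also have "\<dots> = - (\<Sum>i'\<in>{1..n}. \<Sum>k\<in>{1..n}. L i' k * M k j)"
          by (subst sum.swap) simp
        also have "\<dots> = - (\<Sum>i'\<in>{1..n}. (if i' = j then 1 else 0))"
          using inv' jn by simp
        also have "\<dots> = -1" using jn by simp
        finally show ?thesis using e e2 True False by simp
      qed
    qed
  qed
  have Lr: "(\<Sum>k\<in>{1..N}. L i k * r k) = 1 - (if i = N then real N else 0)" if i: "i\<in>{1..N}" for i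
  proof -
    have "(\<Sum>k\<in>{1..N}. L i k * r k) = (\<Sum>l\<in>{1..N}. \<Sum>k\<in>{1..N}. L i k * M' k l)"
      unfolding r_def by (simp add: sum_distrib_left) (rule sum.swap)
    also have "\<dots> = (\<Sum>l\<in>{1..N}. (if i = l then 1 else 0) - (if i = N then 1 else 0))"
      using LM' i by simp
    also have "\<dots> = 1 - (if i = N then real N else 0)"
      using i by (simp add: sum_subtractf)
    finally show ?thesis .
  qed
  have LG: "(\<Sum>k\<in>{1..N}. L i k * G k j) = (if i = j then 1 else 0) - 1 / N"
    if i: "i\<in>{1..N}" and j: "j\<in>{1..N}" for i j
  proof -
    have "(\<Sum>k\<in>{1..N}. L i k * G k j) =
        (\<Sum>k\<in>{1..N}. L i k * M' k j) - (\<Sum>k\<in>{1..N}. L i k * r k) / N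
        - (r j / N - S / N^2) * (\<Sum>k\<in>{1..N}. L i k)"
      using j by (simp add: G_def algebra_simps sum_subtractf sum.distrib sum_distrib_left sum_distrib_right sum_divide_distrib)
    also have "\<dots> = (if i = j then 1 else 0) - 1 / N"
      unfolding LM'[OF i j] Lr[OF i] row[OF i] using Npos by (cases "i = N"; cases "i = j") (simp_all add: diff_divide_distrib)
    finally show ?thesis .
  qed
  have Gsym: "G i j = G j i" for i j by (auto simp: G_def M'sym)
  have GL: "(\<Sum>k\<in>{1..N}. G i k * L k j) = (if i = j then 1 else 0) - 1 / N"
    if i: "i\<in>{1..N}" and j: "j\<in>{1..N}" for i j
  proof -
    have "(\<Sum>k\<in>{1..N}. G i k * L k j) = (\<Sum>k\<in>{1..N}. L j k * G k i)"
      by (rule sum.cong) (rule refl, metis Gsym Lsym mult.commute)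
    then show ?thesis using LG[OF j i] by (metis (full_types))
  qed
  have rcol: "(\<Sum>i\<in>{1..N}. M' i j) = r j" for j unfolding r_def by (rule sum.cong) (rule refl, rule M'sym)
  have Gcol: "(\<Sum>i\<in>{1..N}. G i j) = 0" if j: "j\<in>{1..N}" for j
  proof -
    have "(\<Sum>i\<in>{1..N}. G i j) = (\<Sum>i\<in>{1..N}. M' i j) - S / N - real N * (r j / N) + real N * (S / N^2)"
      using j by (simp add: G_def S_def sum_subtractf sum.distrib sum_divide_distrib)
    also have "\<dots> = 0" using rcol Npos by (simp add: field_simps power2_eq_square)
    finally show ?thesis .
  qed
  have GI: "is_group_inverse N L G"
    unfolding is_group_inverse_def
  proof (intro conjI ballI allI impI)
    fix i j assume "\<not> (i \<in> {1..N} \<and> j \<in> {1..N})" then show "G i j = 0" unfolding G_def by auto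
  next
    fix i j assume i: "i\<in>{1..N}" and j: "j\<in>{1..N}"
    show "mat_mult N L G i j = mat_mult N G L i j"
      using LG[OF i j] GL[OF i j] by (simp add: mat_mult_def)
    have "mat_mult N (mat_mult N L G) L i j = (\<Sum>k\<in>{1..N}. ((if i = k then 1 else 0) - 1 / N) * L k j)"
      unfolding mat_mult_def apply (rule sum.cong[OF refl]) subgoal for k using LG[OF i, of k] by (simp add: mat_mult_def) done
    also have "\<dots> = L i j" using i col[OF j]
      by (simp add: left_diff_distrib sum_subtractf sum_delta_mult2 flip: sum_divide_distrib)
    finally show "mat_mult N (mat_mult N L G) L i j = L i j" .
    have "mat_mult N (mat_mult N G L) G i j = (\<Sum>k\<in>{1..N}. ((if i = k then 1 else 0) - 1 / N) * G k j)"
      unfolding mat_mult_def apply (rule sum.cong[OF refl]) subgoal for k using GL[OF i, of k] by (simp add: mat_mult_def) done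
    also have "\<dots> = G i j" using i Gcol[OF j]
      by (simp add: left_diff_distrib sum_subtractf sum_delta_mult2 flip: sum_divide_distrib)
    finally show "mat_mult N (mat_mult N G L) G i j = G i j" .
  qed
  have gi: "group_inverse N L = G" by (rule group_inverse_eq[OF GI])
  have sumG: "(\<Sum>i\<in>{1..N}. \<Sum>j\<in>{1..N}. G i j) = 0"
    by (subst sum.swap, rule sum.neutral) (use Gcol in blast)
  have trG: "(\<Sum>i\<in>{1..N}. G i i) = (\<Sum>i\<in>{1..N}. M' i i) - S / N"
  proof -
    have "(\<Sum>i\<in>{1..N}. G i i) = (\<Sum>i\<in>{1..N}. M' i i) - 2 * (S / N) + real N * (S / N^2)"
      by (simp add: G_def S_def sum_subtractf sum.distrib sum_divide_distrib sum_distrib_left)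
    then show ?thesis using Npos by (simp add: field_simps power2_eq_square)
  qed
  have K: "kirchhoff_index N cond = real N * (\<Sum>i\<in>{1..N}. M' i i) - S"
  proof -
    have "kirchhoff_index N cond = (1/2) * (\<Sum>i\<in>{1..N}. \<Sum>j\<in>{1..N}. G i i + G j j - 2 * G i j)"
      unfolding kirchhoff_index_def eff_resistance_def using gi by (simp add: L_def)
    also have "\<dots> = (1/2) * (real N * (\<Sum>i\<in>{1..N}. G i i) + real N * (\<Sum>i\<in>{1..N}. G i i)
        - 2 * (\<Sum>i\<in>{1..N}. \<Sum>j\<in>{1..N}. G i j))"
      by (simp add: sum_subtractf sum.distrib sum_distrib_left flip: sum_distrib_left) 
    also have "\<dots> = real N * (\<Sum>i\<in>{1..N}. M' i i) - S"
      using sumG trG Npos by (simp add: field_simps)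
    finally show ?thesis .
  qed
  have tr: "(\<Sum>i\<in>{1..N}. M' i i) = (\<Sum>i\<in>{1..n}. M i i)"
    using NS Nn by (simp add: M'_def)
  have S1: "S = (\<Sum>i\<in>{1..n}. \<Sum>j\<in>{1..n}. M i j)"
    unfolding S_def r_def using NS Nn by (simp add: M'_def)
  have xs2: "(\<Sum>k\<in>{1..n}. x k * L k i) = 1" if "i\<in>{1..n}" for i
  proof -
    have "(\<Sum>k\<in>{1..n}. x k * L k i) = (\<Sum>k\<in>{1..n}. L i k * x k)"
      by (rule sum.cong[OF refl]) (metis Lsym mult.commute)
    then show ?thesis using xs' that by simp
  qed
  have S2: "(\<Sum>i\<in>{1..n}. \<Sum>j\<in>{1..n}. M i j) = (\<Sum>j\<in>{1..n}. x j)"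
  proof -
    have "(\<Sum>i\<in>{1..n}. \<Sum>j\<in>{1..n}. M i j) = (\<Sum>j\<in>{1..n}. \<Sum>i\<in>{1..n}. (\<Sum>k\<in>{1..n}. x k * L k i) * M i j)"
      by (subst sum.swap) (rule sum.cong[OF refl], rule sum.cong[OF refl], subst xs2; simp)
    also have "\<dots> = (\<Sum>j\<in>{1..n}. \<Sum>k\<in>{1..n}. x k * (\<Sum>i\<in>{1..n}. L k i * M i j))"
      by (simp add: sum_distrib_left sum_distrib_right mult.assoc) (subst (2) sum.swap, simp)
    also have "\<dots> = (\<Sum>j\<in>{1..n}. \<Sum>k\<in>{1..n}. x k * (if k = j then 1 else 0))"
      by (rule sum.cong[OF refl], rule sum.cong[OF refl], subst inv'; simp)
    also have "\<dots> = (\<Sum>j\<in>{1..n}. x j)" by (simp add: sum_delta_mult')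
    finally show ?thesis .
  qed
  show ?thesis using K tr S1 S2 by (simp add: N_def)
qed


lemma chebT_mono_aux:
  assumes q: "q > (1::real)"
  shows "1 \<le> chebT k q \<and> chebT k q < chebT (Suc k) q"
proof (induction k)
  case 0 then show ?case using q by simp
next
  case (Suc k)
  then have "chebT (Suc k) q > 1" by linarith
  then have "(2*q - 1) * chebT (Suc k) q > chebT (Suc k) q" using q
    using mult_strict_right_mono[of 1 "2*q-1" "chebT (Suc k) q"] by simp
  moreover have "2*q*chebT (Suc k) q = (2*q-1)*chebT (Suc k) q + chebT (Suc k) q" by (simp add: algebra_simps)
  ultimately show ?case using Suc by (simp only: chebT.simps(3)) linarith
qed

lemma chebT_gt1: "q > (1::real) \<Longrightarrow> m \<ge> 1 \<Longrightarrow> chebT m q > 1"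
  using chebT_mono_aux[of q "m - 1"] by (cases m) auto

lemma chebU_diff: "chebU (Suc (Suc k)) x - chebU k x = 2 * chebT (Suc (Suc k)) x"
proof (induction k x rule: chebT.induct)
  case (1 x) then show ?case by (simp add: algebra_simps)
next
  case (2 x) then show ?case by (simp add: algebra_simps)
next
  case (3 k x)
  note r1 = chebU.simps(3)[of "Suc (Suc k)" x]
  note r2 = chebT.simps(3)[of "Suc (Suc k)" x]
  note r3 = chebU.simps(3)[of k x]
  show ?case using r1 r2 r3 "3.IH" by algebra
qed

lemma chebT_U: "chebT (Suc (Suc k)) x = x * chebU (Suc k) x - chebU k x"
proof (induction k x rule: chebT.induct)
  case (1 x) then show ?case by (simp add: algebra_simps)
next
  case (2 x) then show ?case by (simp add: algebra_simps)
next
  case (3 k x)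
  note r1 = chebU.simps(3)[of "Suc k" x]
  note r2 = chebT.simps(3)[of "Suc (Suc k)" x]
  note r3 = chebU.simps(3)[of k x]
  show ?case using r1 r2 r3 "3.IH" by algebra
qed

lemma chebV_U: "chebV (Suc k) x = chebU (Suc k) x - chebU k x"
proof (induction k x rule: chebT.induct)
  case (1 x) then show ?case by (simp add: algebra_simps)
next
  case (2 x) then show ?case by (simp add: algebra_simps)
next
  case (3 k x)
  note r1 = chebU.simps(3)[of "Suc k" x]
  note r2 = chebV.simps(3)[of "Suc k" x]
  note r3 = chebU.simps(3)[of k x]
  show ?case using r1 r2 r3 "3.IH" by algebra
qed


definition Ue :: "real \<Rightarrow> int \<Rightarrow> real" where
  "Ue q k = (if k < 0 then 0 else chebU (nat k) q)"

lemma Ue_rec: "k \<ge> 0 \<Longrightarrow> Ue q (k+1) = 2 * q * Ue q k - Ue q (k - 1)"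
proof -
  assume k: "k \<ge> 0"
  show ?thesis
  proof (cases "k = 0")
    case True then show ?thesis by (simp add: Ue_def)
  next
    case False
    define k' where "k' = nat k - 1"
    have k': "k = int k' + 1" using k False unfolding k'_def by linarith
    have "nat (k+1) = Suc (Suc k')" "nat k = Suc k'" "nat (k - 1) = k'" using k' by auto
    then show ?thesis using k' by (simp add: Ue_def)
  qed
qed

lemma Ue_nat[simp]: "Ue q (int k) = chebU k q" by (simp add: Ue_def)
lemma Ue_m1[simp]: "Ue q (-1) = 0" by (simp add: Ue_def)

lemma frac3: "(D::real) \<noteq> 0 \<Longrightarrow> 2*q*P - Q - R = t * D \<Longrightarrow> 2*q*(P/D) - Q/D - R/D = t"
  by (simp add: field_simps)

definition Zf :: "nat \<Rightarrow> real \<Rightarrow> nat \<Rightarrow> real" where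
  "Zf m q j = (Ue q (int m - 1 - int j) + Ue q (int j - 1)) / (2 * (chebT m q - 1))"

lemma Z_eq:
  assumes m: "m \<ge> 2" and q: "q > 1" and j: "j < m"
  shows "2 * q * Zf m q j - Zf m q ((j + m - 1) mod m) - Zf m q ((j + 1) mod m) = (if j = 0 then 1 else 0)"
proof -
  define D where "D = 2 * (chebT m q - 1)"
  have D: "D \<noteq> 0" using chebT_gt1[OF q, of m] m by (simp add: D_def)
  show ?thesis
  proof (cases "j = 0")
    case True
    obtain k where mk: "m = Suc (Suc k)" using m by (metis add_2_eq_Suc le_Suc_ex)
    have e1: "(j + m - 1) mod m = Suc k" "(j+1) mod m = 1" using True mk by auto
    have TU: "chebT m q = q * chebU (Suc k) q - chebU k q" unfolding mk by (rule chebT_U)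
    have i1: "int m - 1 - int 0 = int (Suc k)" "int 0 - 1 = (-1::int)" using mk by auto
    have i2: "int m - 1 - int (Suc k) = int 0" "int (Suc k) - 1 = int k" using mk by auto
    have i3: "int m - 1 - int 1 = int k" "int 1 - 1 = int 0" using mk by auto
    have z0: "Zf m q j = chebU (Suc k) q / D" unfolding True Zf_def D_def i1 Ue_nat Ue_m1 by simp
    have zk: "Zf m q (Suc k) = (1 + chebU k q) / D" unfolding Zf_def D_def i2 Ue_nat by simp
    have z1: "Zf m q 1 = (chebU k q + 1) / D" unfolding Zf_def D_def i3 Ue_nat by simp
    have Dv: "D = 2 * (q * chebU (Suc k) q - chebU k q - 1)" using TU D_def by simp
    show ?thesis unfolding e1 z0 zk z1 if_P[OF True]
      by (rule frac3[OF D], simp only: Dv, simp add: algebra_simps del: chebU.simps)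
  next
    case False
    have e1: "(j + m - 1) mod m = j - 1" using False j by (simp add: mod_if)
    have e2: "Zf m q ((j + 1) mod m) = (Ue q (int m - 1 - int j - 1) + Ue q (int j)) / D"
    proof (cases "j + 1 = m")
      case True
      have h: "(j + 1) mod m = 0" "int m - 1 - int j - 1 = -1" "int 0 - 1 = (-1::int)" "int m - 1 - int 0 = int j" using True by auto
      show ?thesis unfolding h Zf_def D_def by (simp add: add.commute)
    next
      case False
      have "int m - 1 - int (j+1) = int m - 1 - int j - 1" "int (j+1) - 1 = int j" by auto
      then show ?thesis using j False by (simp add: Zf_def D_def del: chebU.simps chebT.simps)
    qed
    have e3: "Zf m q (j - 1) = (Ue q (int m - 1 - int j + 1) + Ue q (int j - 1 - 1)) / D"
    proof -
      have "int m - 1 - int (j - 1) = int m - 1 - int j + 1" "int (j - 1) - 1 = int j - 1 - 1"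
        using False by auto
      then show ?thesis by (simp add: Zf_def D_def del: chebU.simps chebT.simps)
    qed
    have e4: "Zf m q j = (Ue q (int m - 1 - int j) + Ue q (int j - 1)) / D" by (simp add: Zf_def D_def)
    have r1: "Ue q (int m - 1 - int j + 1) = 2 * q * Ue q (int m - 1 - int j) - Ue q (int m - 1 - int j - 1)"
      using Ue_rec[of "int m - 1 - int j" q] j by simp
    have r2: "Ue q (int j - 1 + 1) = 2 * q * Ue q (int j - 1) - Ue q (int j - 1 - 1)"
      using Ue_rec[of "int j - 1" q] False by simp
    have r2': "Ue q (int j) = 2 * q * Ue q (int j - 1) - Ue q (int j - 1 - 1)"
      using r2 by simp
    have "2 * q * Zf m q j - Zf m q (j - 1) - Zf m q ((j + 1) mod m) = 0"
      unfolding e2 e3 e4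
      by (rule frac3[OF D], simp only: r1 r2', simp add: algebra_simps del: chebU.simps Ue_nat)
    then show ?thesis using False e1 by simp
  qed
qed


definition Yf :: "nat \<Rightarrow> nat \<Rightarrow> real \<Rightarrow> real \<Rightarrow> nat \<Rightarrow> nat \<Rightarrow> real" where
  "Yf m d c q s j = ((real d - real s) * Zf m q j + real s * Zf m q ((j + m - 1) mod m)) / c"

lemma mod_pred_succ: fixes j m :: nat shows "m \<ge> 1 \<Longrightarrow> j < m \<Longrightarrow> (((j + 1) mod m) + m - 1) mod m = j"
proof -
  assume "m \<ge> 1" "j < m"
  then show ?thesis
  proof (cases "j + 1 = m")
    case True then show ?thesis by simp
  next
    case False
    then have "(j + 1) mod m = j + 1" using \<open>j < m\<close> by simp
    then show ?thesis using \<open>j < m\<close> by simp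
  qed
qed

lemma mod_succ_pred: fixes j m :: nat shows "m \<ge> 1 \<Longrightarrow> j < m \<Longrightarrow> (((j + m - 1) mod m) + 1) mod m = j"
proof -
  assume "m \<ge> 1" "j < m"
  then show ?thesis
  proof (cases "j = 0")
    case True then show ?thesis using \<open>m \<ge> 1\<close> by (simp add: mod_if)
  next
    case False
    then have "(j + m - 1) mod m = j - 1" using \<open>j < m\<close> by (simp add: mod_if)
    then show ?thesis using False \<open>j < m\<close> by simp
  qed
qed

lemma Y_eq:
  assumes m: "m \<ge> 2" and q: "q > 1" and j: "j < m" and c: "c \<noteq> 0"
  shows "2 * q * Yf m d c q s j - Yf m d c q s ((j + m - 1) mod m) - Yf m d c q s ((j + 1) mod m)
     = ((if j = 0 then real d - real s else 0) + (if (j + m - 1) mod m = 0 then real s else 0)) / c"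
proof -
  define j' where "j' = (j + m - 1) mod m"
  define j1 where "j1 = (j + 1) mod m"
  define j'' where "j'' = (j' + m - 1) mod m"
  have j': "j' < m" using m by (simp add: j'_def)
  have a1: "(j1 + m - 1) mod m = j" using mod_pred_succ m j by (simp add: j1_def)
  have a2: "(j' + 1) mod m = j" using mod_succ_pred m j by (simp add: j'_def)
  have z1: "2 * q * Zf m q j - Zf m q j' - Zf m q j1 = (if j = 0 then 1 else 0)"
    using Z_eq[OF m q j] by (simp add: j'_def j1_def)
  have z2: "2 * q * Zf m q j' - Zf m q j'' - Zf m q j = (if j' = 0 then 1 else 0)"
    using Z_eq[OF m q j'] a2 by (simp add: j''_def)
  have "c * (2 * q * Yf m d c q s j - Yf m d c q s j' - Yf m d c q s j1)
      = (real d - real s) * (2 * q * Zf m q j - Zf m q j' - Zf m q j1)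
        + real s * (2 * q * Zf m q j' - Zf m q j'' - Zf m q j)"
    unfolding Yf_def a1 j''_def[symmetric] j'_def[symmetric] using c
    by (simp add: field_simps)
  also have "\<dots> = (if j = 0 then real d - real s else 0) + (if j' = 0 then real s else 0)"
    unfolding z1 z2 by simp
  finally show ?thesis using c unfolding j'_def[symmetric] j1_def[symmetric]
    by (simp add: field_simps)
qed


lemma divmod_eq:
  fixes j d t :: nat
  assumes "t < d" shows "(j*d + t) div d = j" "(j*d + t) mod d = t"
  using assms by auto

lemma nbr_next:
  fixes E :: "nat \<Rightarrow> nat \<Rightarrow> real" and m d w :: nat
  assumes m: "m \<ge> 1" and d: "d \<ge> 1" and w: "w < m*d"
  and cons: "\<And>j. j < m \<Longrightarrow> E j d = E ((j+1) mod m) 0"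
  shows "E (((w+1) mod (m*d)) div d) (((w+1) mod (m*d)) mod d) = E (w div d) (w mod d + 1)"
proof -
  define j where "j = w div d"
  define t where "t = w mod d"
  have wjt: "w = j*d + t" by (simp add: j_def t_def)
  have t: "t < d" using d by (simp add: t_def)
  have j: "j < m" using w d by (simp add: j_def less_mult_imp_div_less)
  show ?thesis
  proof (cases "t + 1 < d")
    case True
    have "w + 1 < m * d"
    proof -
      have "w + 1 < j*d + d" using wjt True by simp
      also have "\<dots> = (j+1) * d" by simp
      also have "\<dots> \<le> m * d" using j by (intro mult_le_mono1) simp
      finally show ?thesis .
    qed
    then have "(w+1) mod (m*d) = j*d + (t+1)" using wjt by simp
    then show ?thesis using divmod_eq[OF True] by (simp add: j_def[symmetric] t_def[symmetric])
  next
    case False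
    then have td: "t + 1 = d" using t by simp
    have c: "E j (t+1) = E ((j+1) mod m) 0" using cons[OF j] td by simp
    show ?thesis
    proof (cases "j + 1 < m")
      case True
      have "w + 1 = (j+1)*d" using wjt td by simp
      moreover have "(j+1)*d < m*d" using True d by (simp only: mult_less_cancel2) simp
      ultimately have "(w+1) mod (m*d) = (j+1)*d + 0" by simp
      then show ?thesis using divmod_eq[of 0 d "j+1"] d c True
        by (simp add: j_def[symmetric] t_def[symmetric] del: divmod_eq)
    next
      case False
      then have "j + 1 = m" using j by simp
      moreover have "w + 1 = (j+1) * d" using wjt td by simp
      ultimately have "w + 1 = m * d" by simp
      then have "(w+1) mod (m*d) = 0" by simp
      then show ?thesis using c \<open>j+1 = m\<close> by (simp add: j_def[symmetric] t_def[symmetric])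
    qed
  qed
qed

lemma nbr_prev:
  fixes E :: "nat \<Rightarrow> nat \<Rightarrow> real" and m d w :: nat
  assumes m: "m \<ge> 1" and d: "d \<ge> 1" and w: "w < m*d"
  shows "E (((w + (m*d - 1)) mod (m*d)) div d) (((w + (m*d - 1)) mod (m*d)) mod d) =
     (if w mod d > 0 then E (w div d) (w mod d - 1) else E ((w div d + m - 1) mod m) (d - 1))"
proof -
  define j where "j = w div d"
  define t where "t = w mod d"
  have wjt: "w = j*d + t" by (simp add: j_def t_def)
  have t: "t < d" using d by (simp add: t_def)
  have j: "j < m" using w d by (simp add: j_def less_mult_imp_div_less)
  have md: "m * d \<ge> 1" using m d by simp
  have dl: "d - 1 < d" using d by simp
  show ?thesis
  proof (cases "t > 0")
    case True
    have w1: "w \<ge> 1" using True wjt by simp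
    have e: "w + (m*d - 1) = (w - 1) + m*d" using md w1 by simp
    have "(w + (m*d - 1)) mod (m*d) = ((w - 1) + m*d) mod (m*d)" by (simp only: e)
    also have "\<dots> = w - 1" using w by simp
    also have "w - 1 = j*d + (t - 1)" using wjt True by simp
    finally have e2: "(w + (m*d - 1)) mod (m*d) = j*d + (t - 1)" .
    have tl: "t - 1 < d" using t by simp
    show ?thesis unfolding e2 divmod_eq[OF tl] j_def[symmetric] t_def[symmetric] using True by simp
  next
    case False
    then have t0: "t = 0" by simp
    obtain m' where m': "m = Suc m'" using m by (cases m) auto
    obtain d' where d': "d = Suc d'" using d by (cases d) auto
    show ?thesis
    proof (cases "j = 0")
      case True
      then have "w = 0" using wjt t0 by simp
      then have e2: "(w + (m*d - 1)) mod (m*d) = (m - 1)*d + (d - 1)" using m' d' by simp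
      have jm: "(j + m - 1) mod m = m - 1" using True m' by simp
      show ?thesis unfolding e2 divmod_eq[OF dl] j_def[symmetric] t_def[symmetric] jm using t0 by simp
    next
      case False
      then obtain j' where j': "j = Suc j'" by (cases j) auto
      then have w1: "w \<ge> 1" using wjt t0 d by simp
      then have e: "w + (m*d - 1) = (w - 1) + m*d" using md by simp
      have "(w + (m*d - 1)) mod (m*d) = ((w - 1) + m*d) mod (m*d)" by (simp only: e)
      also have "\<dots> = w - 1" using w by simp
      also have "w - 1 = (j - 1)*d + (d - 1)" using wjt t0 j' d' by simp
      finally have e2: "(w + (m*d - 1)) mod (m*d) = (j - 1)*d + (d - 1)" .
      have jm: "(j + m - 1) mod m = j - 1" using j j' by simp
      show ?thesis unfolding e2 divmod_eq[OF dl] j_def[symmetric] t_def[symmetric] jm using t0 by simp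
    qed
  qed
qed


definition phi :: "nat \<Rightarrow> real \<Rightarrow> nat \<Rightarrow> nat \<Rightarrow> real" where
  "phi d c s t = real (min s t) * (real d - real (max s t)) / (c * real d)"

definition Ef :: "nat \<Rightarrow> nat \<Rightarrow> real \<Rightarrow> real \<Rightarrow> nat \<Rightarrow> nat \<Rightarrow> nat \<Rightarrow> real" where
  "Ef m d c q s j t = ((real d - real t) * Yf m d c q s j + real t * Yf m d c q s ((j+1) mod m)) / real d
     + (if j = 0 then phi d c s t else 0)"

lemma phi_0[simp]: "phi d c s 0 = 0" by (simp add: phi_def)
lemma phi_d: "s \<le> d \<Longrightarrow> phi d c s d = 0" by (simp add: phi_def max_def)

lemma phi_int:
  assumes c: "c > 0" and t: "0 < t" "t < d" and s: "s < d"
  shows "c * (2 * phi d c s t - phi d c s (t+1) - phi d c s (t-1)) = (if t = s then 1 else 0)"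
proof -
  have d: "real d > 0" using t by simp
  have t1: "real (t - 1) = real t - 1" using t by simp
  consider "t < s" | "t = s" | "t > s" by linarith
  then show ?thesis
  proof cases
    case 1
    then have "min s t = t" "max s t = s" "min s (t+1) = t+1" "max s (t+1) = s" "min s (t-1) = t-1" "max s (t-1) = s"
      by auto
    then show ?thesis using 1 c d t1 unfolding phi_def by (simp add: field_simps)
  next
    case 2
    then have "min s t = s" "max s t = s" "min s (t+1) = s" "max s (t+1) = s+1" "min s (t-1) = s-1" "max s (t-1) = s"
      by auto
    then show ?thesis using 2 c d t1 unfolding phi_def by (simp add: field_simps)
  next
    case 3
    then have "min s t = s" "max s t = t" "min s (t+1) = s" "max s (t+1) = t+1" "min s (t-1) = s" "max s (t-1) = t-1"
      by auto
    then show ?thesis using 3 c d t1 unfolding phi_def by (simp add: field_simps)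
  qed
qed

lemma phi_1:
  assumes c: "c > 0" and s: "s < d"
  shows "c * phi d c s 1 = (if s = 0 then 0 else (real d - real s) / real d)"
proof (cases "s = 0")
  case True then show ?thesis by (simp add: phi_def)
next
  case False
  then have "min s 1 = 1" "max s 1 = s" by auto
  then show ?thesis using False c unfolding phi_def by simp
qed

lemma phi_dm1:
  assumes c: "c > 0" and s: "s < d"
  shows "c * phi d c s (d - 1) = real s / real d"
proof -
  have "min s (d-1) = s" "max s (d-1) = d - 1" using s by auto
  moreover have "real d - real (d - 1) = 1" using s by simp
  ultimately show ?thesis using c unfolding phi_def by simp
qed

lemma lin_int:
  fixes Y Y' P P1 P2 c :: real and d t :: nat
  assumes "t > 0" "d > 0"
  shows "2 * c * (((real d - real t) * Y + real t * Y') / real d + P)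
     - c * (((real d - real (t+1)) * Y + real (t+1) * Y') / real d + P1)
     - c * (((real d - real (t-1)) * Y + real (t-1) * Y') / real d + P2) = c * (2 * P - P1 - P2)"
proof -
  have "real (t - 1) = real t - 1" using assms by simp
  then show ?thesis using assms by (simp add: field_simps)
qed

lemma lin_spoke:
  fixes Y Y' Y1 P1 P2 c q a :: real and d :: nat
  assumes d: "d > 0" and a: "a = 2 * (q - 1) * c / real d"
  shows "(2 * c + a) * Y - c * (((real d - 1) * Y + 1 * Y1) / real d + P1)
     - c * (((real d - real (d - 1)) * Y' + real (d - 1) * Y) / real d + P2)
     = c / real d * (2 * q * Y - Y' - Y1) - c * P1 - c * P2"
proof -
  have "real (d - 1) = real d - 1" using d by simp
  then show ?thesis unfolding a using d by (simp add: field_simps)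
qed


lemma H_eq:
  assumes m: "m \<ge> 2" and d: "d \<ge> 1" and q: "q > 1" and c: "c > 0"
    and a: "a = 2 * (q - 1) * c / real d" and s: "s < d" and w: "w < m * d"
  shows "(2 * c + (if d dvd w then a else 0)) * Ef m d c q s (w div d) (w mod d)
     - c * Ef m d c q s (((w+1) mod (m*d)) div d) (((w+1) mod (m*d)) mod d)
     - c * Ef m d c q s (((w + (m*d-1)) mod (m*d)) div d) (((w + (m*d-1)) mod (m*d)) mod d)
     = (if w = s then 1 else 0)"
proof -
  let ?E = "Ef m d c q s"
  have m1: "m \<ge> 1" using m by simp
  have dpos: "real d > 0" "d > 0" using d by auto
  have cons: "\<And>j. j < m \<Longrightarrow> ?E j d = ?E ((j+1) mod m) 0"
    using dpos s by (simp add: Ef_def phi_d)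
  have N1: "?E (((w+1) mod (m*d)) div d) (((w+1) mod (m*d)) mod d) = ?E (w div d) (w mod d + 1)"
    by (rule nbr_next[OF m1 d w]) (rule cons)
  note N2 = nbr_prev[of m d w ?E, OF m1 d w]
  define j where "j = w div d"
  define t where "t = w mod d"
  have wjt: "w = j*d + t" by (simp add: j_def t_def)
  have t: "t < d" using d by (simp add: t_def)
  have j: "j < m" using w d by (simp add: j_def less_mult_imp_div_less)
  have dvd: "d dvd w \<longleftrightarrow> t = 0" by (simp add: t_def dvd_eq_mod_eq_0)
  show ?thesis
  proof (cases "t > 0")
    case True
    have L: "2 * c * ?E j t - c * ?E j (t+1) - c * ?E j (t-1) =
       c * (2 * (if j = 0 then phi d c s t else 0) - (if j = 0 then phi d c s (t+1) else 0)
         - (if j = 0 then phi d c s (t-1) else 0))"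
      unfolding Ef_def by (rule lin_int[OF True dpos(2)])
    have R: "c * (2 * (if j = 0 then phi d c s t else 0) - (if j = 0 then phi d c s (t+1) else 0)
         - (if j = 0 then phi d c s (t-1) else 0)) = (if w = s then 1 else 0)"
    proof (cases "j = 0")
      case True
      then show ?thesis using phi_int[OF c \<open>t > 0\<close> t s] wjt by simp
    next
      case False
      then have "w \<ge> d" using wjt by (cases j) auto
      then show ?thesis using False s by auto
    qed
    show ?thesis unfolding N1 N2 j_def[symmetric] t_def[symmetric] using True dvd L R by simp
  next
    case False
    then have t0: "t = 0" by simp
    define j' where "j' = (j + m - 1) mod m"
    define j1 where "j1 = (j + 1) mod m"
    have a2: "(j' + 1) mod m = j" using mod_succ_pred m1 j by (simp add: j'_def)
    have E0: "?E j 0 = Yf m d c q s j" using dpos by (simp add: Ef_def)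
    have e1: "?E j (0+1) = ((real d - 1) * Yf m d c q s j + 1 * Yf m d c q s j1) / real d
        + (if j = 0 then phi d c s 1 else 0)"
      unfolding Ef_def j1_def by simp
    have e2: "?E j' (d - 1) = ((real d - real (d - 1)) * Yf m d c q s j' + real (d - 1) * Yf m d c q s j) / real d
        + (if j' = 0 then phi d c s (d - 1) else 0)"
      unfolding Ef_def a2 by (rule refl)
    have L: "(2 * c + a) * ?E j 0 - c * ?E j (0+1) - c * ?E j' (d - 1) =
       c / real d * (2 * q * Yf m d c q s j - Yf m d c q s j' - Yf m d c q s j1)
       - c * (if j = 0 then phi d c s 1 else 0) - c * (if j' = 0 then phi d c s (d-1) else 0)"
      unfolding E0 e1 e2 by (rule lin_spoke[OF dpos(2) a])
    have YE: "2 * q * Yf m d c q s j - Yf m d c q s j' - Yf m d c q s j1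
       = ((if j = 0 then real d - real s else 0) + (if j' = 0 then real s else 0)) / c"
      using Y_eq[OF m q j, of c d s] c by (simp add: j'_def j1_def)
    have R: "c / real d * (((if j = 0 then real d - real s else 0) + (if j' = 0 then real s else 0)) / c)
       - c * (if j = 0 then phi d c s 1 else 0) - c * (if j' = 0 then phi d c s (d-1) else 0)
       = (if w = s then 1 else 0)"
    proof (cases "j = 0")
      case True
      then have "j' \<noteq> 0" using m by (simp add: j'_def)
      moreover have "w = 0" using True wjt t0 by simp
      ultimately show ?thesis using True phi_1[OF c s] c dpos by (auto simp: field_simps)
    next
      case False
      then have "w \<ge> d" using wjt by (cases j) auto
      then have ws: "w \<noteq> s" using s by auto
      show ?thesis
      proof (cases "j' = 0")
        case True
        then show ?thesis using False ws phi_dm1[OF c s] c dpos by (simp add: field_simps)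
      next
        case False
        then show ?thesis using \<open>j \<noteq> 0\<close> ws by simp
      qed
    qed
    show ?thesis unfolding N1 N2 j_def[symmetric] t_def[symmetric] j'_def[symmetric]
      using t0 dvd L YE R by simp
  qed
qed


definition Xf :: "nat \<Rightarrow> real \<Rightarrow> real \<Rightarrow> nat \<Rightarrow> real" where
  "Xf d a c t = real d / a + real t * (real d - real t) / (2 * c)"

lemma X_eq:
  assumes m: "m \<ge> 2" and d: "d \<ge> 1" and a: "a > 0" and c: "c > 0" and w: "w < m * d"
  shows "(2 * c + (if d dvd w then a else 0)) * Xf d a c (w mod d)
     - c * Xf d a c (((w+1) mod (m*d)) mod d)
     - c * Xf d a c (((w + (m*d-1)) mod (m*d)) mod d) = 1"
proof -
  have m1: "m \<ge> 1" using m by simp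
  have N1: "(\<lambda>j t. Xf d a c t) (((w+1) mod (m*d)) div d) (((w+1) mod (m*d)) mod d) = (\<lambda>j t. Xf d a c t) (w div d) (w mod d + 1)"
    by (rule nbr_next[OF m1 d w]) (simp add: Xf_def)
  have N2: "(\<lambda>j t. Xf d a c t) (((w + (m*d - 1)) mod (m*d)) div d) (((w + (m*d - 1)) mod (m*d)) mod d) =
     (if w mod d > 0 then (\<lambda>j t. Xf d a c t) (w div d) (w mod d - 1) else (\<lambda>j t. Xf d a c t) ((w div d + m - 1) mod m) (d - 1))"
    by (rule nbr_prev[OF m1 d w])
  define t where "t = w mod d"
  have t: "t < d" using d by (simp add: t_def)
  have dvd: "d dvd w \<longleftrightarrow> t = 0" by (simp add: t_def dvd_eq_mod_eq_0)
  have N1': "Xf d a c (((w+1) mod (m*d)) mod d) = Xf d a c (t + 1)" using N1 by (simp add: t_def)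
  have N2': "Xf d a c (((w + (m*d - 1)) mod (m*d)) mod d) = (if t > 0 then Xf d a c (t - 1) else Xf d a c (d - 1))"
    using N2 by (simp add: t_def)
  show ?thesis
  proof (cases "t > 0")
    case True
    have "real (t - 1) = real t - 1" using True by simp
    then show ?thesis unfolding N1' N2' t_def[symmetric] using True dvd c
      by (simp add: Xf_def field_simps)
  next
    case False
    then have t0: "t = 0" by simp
    have "real (d - 1) = real d - 1" using d by simp
    then show ?thesis unfolding N1' N2' t_def[symmetric] using t0 dvd c a
      by (simp add: Xf_def field_simps)
  qed
qed

lemma spoke_iff:
  fixes m d i :: nat
  assumes "i \<in> {1..m*d}" "d \<ge> 1"
  shows "i \<in> {1 + (k - 1) * d | k. k \<in> {1..m}} \<longleftrightarrow> d dvd (i - 1)"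
proof
  assume "i \<in> {1 + (k - 1) * d | k. k \<in> {1..m}}"
  then obtain k where "i = 1 + (k - 1) * d" by auto
  then show "d dvd (i - 1)" by simp
next
  assume "d dvd (i - 1)"
  then obtain k where k: "i - 1 = d * k" by auto
  have il: "i - 1 < m * d" using assms by auto
  have "k < m"
  proof (rule ccontr)
    assume "\<not> k < m" then have "m * d \<le> k * d" by simp
    then show False using il k by (simp add: mult.commute)
  qed
  then have "Suc k \<in> {1..m}" by simp
  moreover have "i = 1 + (Suc k - 1) * d"
  proof -
    have "i \<ge> 1" using assms by auto
    then have "i = Suc (d * k)" using k by arith
    then show ?thesis by (simp add: mult.commute)
  qed
  ultimately show "i \<in> {1 + (k - 1) * d | k. k \<in> {1..m}}" by blast
qed

lemma wc_sym: "wheel_cond m d a c i j = wheel_cond m d a c j i"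
  unfolding wheel_cond_def Let_def by auto

lemma wc_eval:
  assumes n: "m * d \<ge> 3" and d: "d \<ge> 1" and i: "i \<in> {1..m*d}" and k: "k \<in> {1..m*d+1}" and ki: "k \<noteq> i"
  shows "wheel_cond m d a c i k =
    (if k = (if i = 1 then m*d else i - 1) then c else 0) + (if k = (if i = m*d then 1 else i + 1) then c else 0)
    + (if k = m*d + 1 \<and> d dvd (i - 1) then a else 0)"
proof -
  have sp: "i \<in> {1 + (k - 1) * d | k. k \<in> {1..m}} \<longleftrightarrow> d dvd (i - 1)" by (rule spoke_iff[OF i d])
  show ?thesis
  proof (cases "k = m*d + 1")
    case True
    then show ?thesis using i sp unfolding wheel_cond_def Let_def by auto
  next
    case False
    then have kn: "k \<in> {1..m*d}" using k by auto
    show ?thesis using i kn ki n unfolding wheel_cond_def Let_def by auto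
  qed
qed


lemma wheel_row:
  assumes n: "m * d \<ge> 3" and d: "d \<ge> 1" and i: "i \<in> {1..m*d}"
  shows "(\<Sum>k\<in>{1..m*d}. laplacian (m*d+1) (wheel_cond m d a c) i k * X k) =
    (2 * c + (if d dvd (i - 1) then a else 0)) * X i
    - c * X (if i = 1 then m*d else i - 1) - c * X (if i = m*d then 1 else i + 1)"
proof -
  define n where "n = m * d"
  define p where "p = (if i = 1 then m*d else i - 1)"
  define nx where "nx = (if i = m*d then 1 else i + 1)"
  define sp where "sp = (d dvd (i - 1))"
  have nn: "n \<ge> 3" using n by (simp add: n_def)
  have iN: "i \<in> {1..n}" using i by (simp add: n_def)
  have pin: "p \<in> {1..n}" "p \<noteq> i" "p \<noteq> n + 1" using iN nn by (auto simp: p_def n_def)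
  have nxin: "nx \<in> {1..n}" "nx \<noteq> i" "nx \<noteq> n + 1" "nx \<noteq> p" using iN nn by (auto simp: nx_def p_def n_def)
  have ev: "wheel_cond m d a c i k = (if k = p then c else 0) + (if k = nx then c else 0) + (if sp then (if k = n + 1 then a else 0) else 0)"
    if "k \<in> {1..n+1}" "k \<noteq> i" for k
    using wc_eval[OF n d i, of k a c] that by (auto simp: p_def nx_def sp_def n_def)
  have deg: "laplacian (n+1) (wheel_cond m d a c) i i = 2 * c + (if sp then a else 0)"
  proof -
    have "laplacian (n+1) (wheel_cond m d a c) i i = (\<Sum>k\<in>{1..n+1}-{i}. wheel_cond m d a c i k)"
      using iN by (simp add: laplacian_def)
    also have "\<dots> = (\<Sum>k\<in>{1..n+1}-{i}. (if k = p then c else 0) + (if k = nx then c else 0) + (if sp then (if k = n + 1 then a else 0) else 0))"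
      by (rule sum.cong) (auto simp: ev)
    also have "\<dots> = 2 * c + (if sp then a else 0)"
      using pin nxin iN by (simp add: sum.distrib sum.delta)
    finally show ?thesis .
  qed
  have off: "laplacian (n+1) (wheel_cond m d a c) i k = - ((if k = p then c else 0) + (if k = nx then c else 0))"
    if "k \<in> {1..n}-{i}" for k
  proof -
    have "k \<in> {1..n+1}" "k \<noteq> i" "k \<noteq> n + 1" using that by auto
    then show ?thesis using iN ev[of k] by (simp add: laplacian_def)
  qed
  have "(\<Sum>k\<in>{1..n}. laplacian (n+1) (wheel_cond m d a c) i k * X k) =
      laplacian (n+1) (wheel_cond m d a c) i i * X i + (\<Sum>k\<in>{1..n}-{i}. laplacian (n+1) (wheel_cond m d a c) i k * X k)"
    using iN by (simp add: sum.remove)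
  also have "(\<Sum>k\<in>{1..n}-{i}. laplacian (n+1) (wheel_cond m d a c) i k * X k)
     = (\<Sum>k\<in>{1..n}-{i}. (if k = p then - (c * X k) else 0) + (if k = nx then - (c * X k) else 0))"
    apply (rule sum.cong[OF refl])
    subgoal for k using off[of k] by simp
    done
  also have "\<dots> = - c * X p - c * X nx"
    using pin nxin by (simp only: sum.distrib) (simp add: sum.delta)
  finally show ?thesis using deg by (simp add: n_def p_def nx_def sp_def algebra_simps)
qed


lemma shift_facts:
  fixes m d v u :: nat
  assumes d: "d \<ge> 1" and v: "v < m * d" and u: "u < m * d"
  defines "r \<equiv> m * d - (u div d) * d"
  defines "w \<equiv> (v + r) mod (m * d)"
  shows "((v + 1) mod (m*d) + r) mod (m*d) = (w + 1) mod (m*d)"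
    and "((v + (m*d - 1)) mod (m*d) + r) mod (m*d) = (w + (m*d - 1)) mod (m*d)"
    and "d dvd w \<longleftrightarrow> d dvd v"
    and "w = u mod d \<longleftrightarrow> v = u"
    and "w < m * d"
proof -
  define n where "n = m * d"
  have npos: "n > 0" unfolding n_def using v by linarith
  show "((v + 1) mod (m*d) + r) mod (m*d) = (w + 1) mod (m*d)"
  proof -
    have e1: "((v + 1) mod (m*d) + r) mod (m*d) = (v + 1 + r) mod (m*d)" by (rule mod_add_left_eq)
    have e2: "((v + r) mod (m*d) + 1) mod (m*d) = (v + r + 1) mod (m*d)" by (rule mod_add_left_eq)
    have e3: "v + 1 + r = v + r + 1" by simp
    show ?thesis unfolding w_def e1 e2 e3 ..
  qed
  show "((v + (m*d - 1)) mod (m*d) + r) mod (m*d) = (w + (m*d - 1)) mod (m*d)"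
  proof -
    have e1: "((v + (m*d - 1)) mod (m*d) + r) mod (m*d) = (v + (m*d - 1) + r) mod (m*d)" by (rule mod_add_left_eq)
    have e2: "((v + r) mod (m*d) + (m*d - 1)) mod (m*d) = (v + r + (m*d - 1)) mod (m*d)" by (rule mod_add_left_eq)
    have e3: "v + (m*d - 1) + r = v + r + (m*d - 1)" by simp
    show ?thesis unfolding w_def e1 e2 e3 ..
  qed
  have kd: "(u div d) * d \<le> u" by simp
  have rd: "r = (m - u div d) * d" by (simp add: r_def diff_mult_distrib)
  have ddn: "d dvd m * d" by simp
  show "d dvd w \<longleftrightarrow> d dvd v"
    unfolding w_def dvd_mod_iff[OF ddn] rd by (simp add: dvd_add_left_iff)
  have ur: "u + r = u mod d + m * d"
  proof -
    have "u = (u div d) * d + u mod d" by simp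
    moreover have "(u div d) * d \<le> m * d" using kd u by linarith
    ultimately show ?thesis unfolding r_def by linarith
  qed
  have umod: "u mod d < m * d" using u by (meson le_less_trans mod_less_eq_dividend)
  show "w = u mod d \<longleftrightarrow> v = u"
  proof
    assume vu: "v = u"
    show "w = u mod d" unfolding w_def vu ur using umod by simp
  next
    assume ws: "w = u mod d"
    have "(w + (u div d) * d) mod (m*d) = v"
    proof -
      have "(w + (u div d) * d) mod (m*d) = (v + r + (u div d) * d) mod (m*d)"
        unfolding w_def by (simp add: mod_add_left_eq)
      also have "v + r + (u div d) * d = v + m * d" unfolding r_def using kd u by linarith
      finally show ?thesis using v by simp
    qed
    moreover have "(w + (u div d) * d) mod (m*d) = u" unfolding ws using u by simp
    ultimately show "v = u" by simp
  qed
  show "w < m * d" unfolding w_def using npos n_def by simp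
qed

definition Mv :: "nat \<Rightarrow> nat \<Rightarrow> real \<Rightarrow> real \<Rightarrow> nat \<Rightarrow> nat \<Rightarrow> real" where
  "Mv m d c q v u = Ef m d c q (u mod d) (((v + (m * d - (u div d) * d)) mod (m * d)) div d)
      (((v + (m * d - (u div d) * d)) mod (m * d)) mod d)"

lemma prv_nxt:
  fixes n i :: nat
  assumes "i \<in> {1..n}"
  shows "(if i = 1 then n else i - 1) - 1 = (i - 1 + (n - 1)) mod n"
    and "(if i = n then 1 else i + 1) - 1 = (i - 1 + 1) mod n"
proof -
  show "(if i = 1 then n else i - 1) - 1 = (i - 1 + (n - 1)) mod n"
  proof (cases "i = 1")
    case True then show ?thesis using assms by simp
  next
    case False
    then have "i - 1 + (n - 1) = (i - 2) + n" using assms by auto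
    then have "(i - 1 + (n - 1)) mod n = (i - 2) mod n" by simp
    also have "\<dots> = i - 2"
    proof -
      have "i - 2 < n" using assms by auto
      then show ?thesis by simp
    qed
    finally show ?thesis using False by simp
  qed
  show "(if i = n then 1 else i + 1) - 1 = (i - 1 + 1) mod n"
    using assms by auto
qed

lemma M_inv:
  assumes m: "m \<ge> 2" and d: "d \<ge> 1" and n3: "m * d \<ge> 3" and q: "q > 1" and c: "c > 0"
    and a: "a = 2 * (q - 1) * c / real d"
    and i: "i \<in> {1..m*d}" and j: "j \<in> {1..m*d}"
  shows "(\<Sum>k\<in>{1..m*d}. laplacian (m*d+1) (wheel_cond m d a c) i k * Mv m d c q (k - 1) (j - 1))
     = (if i = j then 1 else 0)"
proof -
  define v where "v = i - 1"
  define u where "u = j - 1"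
  have v: "v < m * d" and u: "u < m * d" using i j by (auto simp: v_def u_def)
  define r where "r = m * d - (u div d) * d"
  define w where "w = (v + r) mod (m * d)"
  note SF = shift_facts[OF d v u, folded r_def, folded w_def]
  have s: "u mod d < d" using d by simp
  have Mvw: "Mv m d c q x u = Ef m d c q (u mod d) (((x + r) mod (m*d)) div d) (((x + r) mod (m*d)) mod d)" for x
    by (simp add: Mv_def r_def)
  have "(\<Sum>k\<in>{1..m*d}. laplacian (m*d+1) (wheel_cond m d a c) i k * Mv m d c q (k - 1) (j - 1))
     = (2 * c + (if d dvd v then a else 0)) * Mv m d c q v u
       - c * Mv m d c q ((v + (m*d - 1)) mod (m*d)) u - c * Mv m d c q ((v + 1) mod (m*d)) u"
    using wheel_row[OF n3 d i, of a c "\<lambda>k. Mv m d c q (k - 1) (j - 1)"] prv_nxt[OF i]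
    by (simp add: v_def u_def)
  also have "\<dots> = (2 * c + (if d dvd w then a else 0)) * Ef m d c q (u mod d) (w div d) (w mod d)
     - c * Ef m d c q (u mod d) (((w+1) mod (m*d)) div d) (((w+1) mod (m*d)) mod d)
     - c * Ef m d c q (u mod d) (((w + (m*d-1)) mod (m*d)) div d) (((w + (m*d-1)) mod (m*d)) mod d)"
    unfolding Mvw SF(1) SF(2) SF(3) w_def[symmetric] by simp
  also have "\<dots> = (if w = u mod d then 1 else 0)"
    by (rule H_eq[OF m d q c a s SF(5)])
  also have "\<dots> = (if i = j then 1 else 0)" using SF(4) i j by (auto simp: v_def u_def)
  finally show ?thesis .
qed

lemma X_inv:
  assumes m: "m \<ge> 2" and d: "d \<ge> 1" and n3: "m * d \<ge> 3" and a: "a > 0" and c: "c > 0"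
    and i: "i \<in> {1..m*d}"
  shows "(\<Sum>k\<in>{1..m*d}. laplacian (m*d+1) (wheel_cond m d a c) i k * Xf d a c ((k - 1) mod d)) = 1"
proof -
  define v where "v = i - 1"
  have v: "v < m * d" using i by (auto simp: v_def)
  have "(\<Sum>k\<in>{1..m*d}. laplacian (m*d+1) (wheel_cond m d a c) i k * Xf d a c ((k - 1) mod d))
     = (2 * c + (if d dvd v then a else 0)) * Xf d a c (v mod d)
       - c * Xf d a c (((v + (m*d - 1)) mod (m*d)) mod d) - c * Xf d a c (((v + 1) mod (m*d)) mod d)"
    using wheel_row[OF n3 d i, of a c "\<lambda>k. Xf d a c ((k - 1) mod d)"] prv_nxt[OF i]
    by (simp add: v_def)
  also have "\<dots> = 1" using X_eq[OF m d a c v] by simp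
  finally show ?thesis .
qed


lemma sum_shift1: fixes n :: nat shows "(\<Sum>i\<in>{1..n}. F (i - 1)) = (\<Sum>u<n. (F u :: real))"
  by (induction n) (auto simp: atLeastAtMostSuc_conv)

lemma sum_mod:
  fixes f :: "nat \<Rightarrow> real"
  shows "(\<Sum>u<m*d. f (u mod d)) = real m * (\<Sum>s<d. f s)"
proof -
  have "(\<Sum>u<m*d. f (u mod d)) = (\<Sum>j<m. \<Sum>u\<in>{j*d..<j*d+d}. f (u mod d))"
    by (rule sum.nat_group[symmetric])
  also have "\<dots> = (\<Sum>j<m. \<Sum>s<d. f s)"
  proof (rule sum.cong[OF refl])
    fix j
    have "(\<Sum>u\<in>{j*d..<j*d+d}. f (u mod d)) = (\<Sum>u\<in>{0+j*d..<d+j*d}. f (u mod d))" by (simp add: add.commute)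
    also have "\<dots> = (\<Sum>i\<in>{0..<d}. f ((i + j*d) mod d))" by (rule sum.shift_bounds_nat_ivl)
    also have "\<dots> = (\<Sum>s<d. f s)" by (simp add: atLeast0LessThan)
    finally show "(\<Sum>u\<in>{j*d..<j*d+d}. f (u mod d)) = (\<Sum>s<d. f s)" .
  qed
  also have "\<dots> = real m * (\<Sum>s<d. f s)" by simp
  finally show ?thesis .
qed

lemma sum_s: "(\<Sum>s<d. real s) = real d * (real d - 1) / 2"
  by (induction d) (auto simp: field_simps)

lemma sum_s2: "(\<Sum>s<d. (real s)^2) = real d * (real d - 1) * (2 * real d - 1) / 6"
  by (induction d) (auto simp: field_simps power2_eq_square)

lemma sum_quad:
  fixes f :: "nat \<Rightarrow> real"
  assumes "\<And>s. f s = b0 + b1 * real s + b2 * (real s)^2"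
  shows "(\<Sum>s<d. f s) = real d * b0 + b1 * (real d * (real d - 1) / 2) + b2 * (real d * (real d - 1) * (2 * real d - 1) / 6)"
proof -
  have "(\<Sum>s<d. f s) = (\<Sum>s<d. b0) + b1 * (\<Sum>s<d. real s) + b2 * (\<Sum>s<d. (real s)^2)"
    by (simp add: assms sum.distrib sum_distrib_left)
  then show ?thesis by (simp add: sum_s sum_s2)
qed

lemma Mv_diag:
  assumes d: "d \<ge> 1" and u: "u < m * d"
  shows "Mv m d c q u u = Ef m d c q (u mod d) 0 (u mod d)"
proof -
  have "(u + (m * d - (u div d) * d)) mod (m * d) = u mod d"
    using shift_facts(4)[OF d u u] by simp
  moreover have "(u mod d) div d = 0" "(u mod d) mod d = u mod d" by simp_all
  ultimately show ?thesis by (simp add: Mv_def)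
qed

lemma Zf_last: "m \<ge> 2 \<Longrightarrow> Zf m q (m - 1) = Zf m q 1"
  by (simp add: Zf_def of_nat_diff add.commute)

lemma g_quad:
  assumes m: "m \<ge> 2" and d: "d \<ge> 1" and c: "c \<noteq> 0" and s: "s < d"
  shows "Ef m d c q s 0 s = Zf m q 0 * real d / c
     + ((- 2 * Zf m q 0 + 2 * Zf m q 1 + 1) / c) * real s
     + ((2 * Zf m q 0 - 2 * Zf m q 1 - 1) / (c * real d)) * (real s)^2"
proof -
  have i1: "(0 + m - 1) mod m = m - 1" "(0 + 1) mod m = 1" "(1 + m - 1) mod m = 0" using m by auto
  have ph: "phi d c s s = real s * (real d - real s) / (c * real d)" by (simp add: phi_def)
  have dpos: "real d > 0" using d by simp
  show ?thesis
    unfolding Ef_def Yf_def i1 Zf_last[OF m] ph using c dpos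
    by (simp add: field_simps power2_eq_square)
qed


lemma final_alg:
  fixes a c dd mm U1 U2 T V q :: real
  assumes a: "a \<noteq> 0" and c: "c \<noteq> 0" and dd: "dd \<noteq> 0"
    and q: "q = a * dd / (2 * c) + 1" and T: "T = q * U1 - U2" and T1: "T - 1 \<noteq> 0" and V: "V = U1 - U2"
  shows "(mm * dd + 1) * (mm * (dd * ((U1 / (2 * (T - 1))) * dd / c)
      + ((- 2 * (U1 / (2 * (T - 1))) + 2 * ((U2 + 1) / (2 * (T - 1))) + 1) / c) * (dd * (dd - 1) / 2)
      + ((2 * (U1 / (2 * (T - 1))) - 2 * ((U2 + 1) / (2 * (T - 1))) - 1) / (c * dd)) * (dd * (dd - 1) * (2 * dd - 1) / 6)))
    - mm * (dd * (dd / a) + (dd / (2 * c)) * (dd * (dd - 1) / 2) + (- 1 / (2 * c)) * (dd * (dd - 1) * (2 * dd - 1) / 6))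
    = - (1 / (2 * c)) * ((mm * dd + 1) / (T - 1)) *
      ((a * (mm * dd) / (6 * c) - dd * (mm * dd) + dd^2) * U1
       + (2 * c * dd / a + dd * (mm * dd) / 3) * (V - 1))
    + dd / a + dd * (mm * dd) * (mm * dd + 1) / (6 * c)
    - (dd^2 - 1) * (mm * dd) / (12 * c)"
proof -
  define W where "W = T - 1"
  define b where "b = a * dd / (2 * c)"
  have W: "W \<noteq> 0" using T1 by (simp add: W_def)
  have U2e: "U2 + 1 = (b + 1) * U1 - W" using T q by (simp add: W_def b_def)
  have Ve: "V - 1 = W - b * U1" using T q V by (simp add: W_def b_def algebra_simps)
  have bb: "2 * c * dd / a * b = dd^2" using a c by (simp add: b_def power2_eq_square)
  have bn: "a * dd^2 / (6 * c) = b * dd / 3" using c by (simp add: b_def power2_eq_square)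
  have Sg: "dd * ((U1 / (2 * W)) * dd / c)
      + ((- 2 * (U1 / (2 * W)) + 2 * ((U2 + 1) / (2 * W)) + 1) / c) * (dd * (dd - 1) / 2)
      + ((2 * (U1 / (2 * W)) - 2 * ((U2 + 1) / (2 * W)) - 1) / (c * dd)) * (dd * (dd - 1) * (2 * dd - 1) / 6)
      = U1 * (dd^2 / 2 + (dd^2 - 1) * b / 6) / (c * W)"
    unfolding U2e using W c dd by (simp add: field_simps power2_eq_square)
  have Sx: "dd * (dd / a) + (dd / (2 * c)) * (dd * (dd - 1) / 2) + (- 1 / (2 * c)) * (dd * (dd - 1) * (2 * dd - 1) / 6)
      = dd^2 / a + dd * (dd^2 - 1) / (12 * c)"
    using a c by (simp add: field_simps power2_eq_square)
  have R: "- (1 / (2 * c)) * ((mm * dd + 1) / W) *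
      ((a * (mm * dd) / (6 * c) - dd * (mm * dd) + dd^2) * U1
       + (2 * c * dd / a + dd * (mm * dd) / 3) * (W - b * U1))
    + dd / a + dd * (mm * dd) * (mm * dd + 1) / (6 * c)
    = (mm * dd + 1) * mm * U1 * (dd^2 / 2 + (dd^2 - 1) * b / 6) / (c * W) - mm * dd^2 / a"
  proof -
    have e: "(a * (mm * dd) / (6 * c) - dd * (mm * dd) + dd^2) * U1
       + (2 * c * dd / a + dd * (mm * dd) / 3) * (W - b * U1)
       = U1 * (a * (mm * dd) / (6 * c) - dd * (mm * dd) + dd^2 - 2 * c * dd / a * b - dd * (mm * dd) / 3 * b)
         + (2 * c * dd / a + dd * (mm * dd) / 3) * W"
      using a c by (simp add: field_simps)
    have e2: "dd * (mm * dd) / 3 * b = mm * (a * dd^2 / (6 * c)) * dd"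
      unfolding bn by (simp add: algebra_simps)
    show ?thesis unfolding e bb e2 using W a c dd
      by (simp add: field_simps power2_eq_square b_def)
  qed
  show ?thesis unfolding W_def[symmetric] Sg Sx Ve R using W a c dd
    by (simp add: field_simps power2_eq_square)
qed


theorem proposition3p1:
  fixes m d :: nat and a c :: real
  assumes "m \<ge> 2" and "d \<ge> 1" and "m * d \<ge> 3" and "a > 0" and "c > 0"
  defines "n \<equiv> m * d"
  defines "q \<equiv> a * real d / (2 * c) + 1"
  shows "kirchhoff_index (n + 1) (wheel_cond m d a c) =
    - (1 / (2 * c)) * ((real n + 1) / (chebT m q - 1)) *
      ((a * real n / (6 * c) - real d * real n + (real d)^2) * chebU (m - 1) q
       + (2 * c * real d / a + real d * real n / 3) * (chebV (m - 1) q - 1))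
    + real d / a + real d * real n * (real n + 1) / (6 * c)
    - ((real d)^2 - 1) * real n / (12 * c)"
proof -
  note m = assms(1) and d = assms(2) and n3 = assms(3) and apos = assms(4) and cpos = assms(5)
  have dpos: "real d > 0" using d by simp
  have cne: "c \<noteq> 0" using cpos by simp
  have q1: "q > 1" using apos cpos dpos by (simp add: q_def)
  have aq: "a = 2 * (q - 1) * c / real d" using cpos dpos by (simp add: q_def field_simps)
  define g where "g s = Ef m d c q s 0 s" for s
  define Z0 where "Z0 = Zf m q 0"
  define Z1 where "Z1 = Zf m q 1"
  define A1 where "A1 = real d * (real d - 1) / 2"
  define A2 where "A2 = real d * (real d - 1) * (2 * real d - 1) / 6"
  have K0: "kirchhoff_index (m*d + 1) (wheel_cond m d a c) =
     real (m*d + 1) * (\<Sum>i\<in>{1..m*d}. Mv m d c q (i - 1) (i - 1)) - (\<Sum>i\<in>{1..m*d}. Xf d a c ((i - 1) mod d))"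
    by (rule kirchhoff_reduced[OF wc_sym M_inv[OF m d n3 q1 cpos aq] X_inv[OF m d n3 apos cpos]])
  have trM: "(\<Sum>i\<in>{1..m*d}. Mv m d c q (i - 1) (i - 1)) = real m * (real d * (Z0 * real d / c)
      + ((- 2 * Z0 + 2 * Z1 + 1) / c) * A1 + ((2 * Z0 - 2 * Z1 - 1) / (c * real d)) * A2)"
  proof -
    have "(\<Sum>i\<in>{1..m*d}. Mv m d c q (i - 1) (i - 1)) = (\<Sum>u<m*d. Mv m d c q u u)"
      by (rule sum_shift1)
    also have "\<dots> = (\<Sum>u<m*d. g (u mod d))"
      by (rule sum.cong[OF refl]) (simp add: g_def Mv_diag[OF d])
    also have "\<dots> = real m * (\<Sum>s<d. g s)" by (rule sum_mod)
    also have "(\<Sum>s<d. g s) = real d * (Z0 * real d / c)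
      + ((- 2 * Z0 + 2 * Z1 + 1) / c) * A1 + ((2 * Z0 - 2 * Z1 - 1) / (c * real d)) * A2"
    proof -
      have "(\<Sum>s<d. g s) = (\<Sum>s<d. Zf m q 0 * real d / c
        + ((- 2 * Zf m q 0 + 2 * Zf m q 1 + 1) / c) * real s
        + ((2 * Zf m q 0 - 2 * Zf m q 1 - 1) / (c * real d)) * (real s)^2)"
        apply (rule sum.cong[OF refl])
        subgoal premises p for s
          using g_quad[OF m d, where c=c and s=s and q=q] cpos p unfolding g_def by simp
        done
      also have "\<dots> = real d * (Z0 * real d / c) + ((- 2 * Z0 + 2 * Z1 + 1) / c) * A1
          + ((2 * Z0 - 2 * Z1 - 1) / (c * real d)) * A2"
        unfolding Z0_def Z1_def A1_def A2_def by (rule sum_quad) (rule refl)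
      finally show ?thesis .
    qed
    finally show ?thesis .
  qed
  have sX: "(\<Sum>i\<in>{1..m*d}. Xf d a c ((i - 1) mod d)) = real m * (real d * (real d / a)
      + (real d / (2 * c)) * A1 + (- 1 / (2 * c)) * A2)"
  proof -
    have "(\<Sum>i\<in>{1..m*d}. Xf d a c ((i - 1) mod d)) = (\<Sum>u<m*d. Xf d a c (u mod d))"
      by (rule sum_shift1)
    also have "\<dots> = real m * (\<Sum>t<d. Xf d a c t)" by (rule sum_mod)
    also have "(\<Sum>t<d. Xf d a c t) = real d * (real d / a) + (real d / (2 * c)) * A1 + (- 1 / (2 * c)) * A2"
      unfolding A1_def A2_def
      using cne by (intro sum_quad) (simp add: Xf_def field_simps power2_eq_square)
    finally show ?thesis .
  qed
  obtain k where mk: "m = Suc (Suc k)" using m by (metis add_2_eq_Suc le_Suc_ex)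
  define U1 where "U1 = chebU (m - 1) q"
  define U2 where "U2 = chebU (m - 2) q"
  have TU: "chebT m q = q * U1 - U2" unfolding U1_def U2_def mk using chebT_U by simp
  have VU: "chebV (m - 1) q = U1 - U2" unfolding U1_def U2_def mk using chebV_U by simp
  have T1: "chebT m q - 1 \<noteq> 0" using chebT_gt1[OF q1, of m] m by simp
  have Z0v: "Z0 = U1 / (2 * (chebT m q - 1))"
  proof -
    have e: "int m - 1 - int 0 = int (m - 1)" "int 0 - 1 = (-1::int)" using m by auto
    show ?thesis unfolding Z0_def Zf_def U1_def e Ue_nat Ue_m1 by simp
  qed
  have Z1v: "Z1 = (U2 + 1) / (2 * (chebT m q - 1))"
  proof -
    have e: "int m - 1 - int 1 = int (m - 2)" "int 1 - 1 = int 0" using m by auto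
    show ?thesis unfolding Z1_def Zf_def U2_def e Ue_nat by (simp add: add.commute)
  qed
  have qv: "q = a * real d / (2 * c) + 1" by (simp add: q_def)
  note FA = final_alg[of a c "real d" q "chebT m q" U1 U2 "chebV (m - 1) q" "real m", OF _ _ _ qv TU T1 VU]
  have FA': "(real m * real d + 1) * (real m * (real d * (Z0 * real d / c)
      + ((- 2 * Z0 + 2 * Z1 + 1) / c) * A1 + ((2 * Z0 - 2 * Z1 - 1) / (c * real d)) * A2))
    - real m * (real d * (real d / a) + (real d / (2 * c)) * A1 + (- 1 / (2 * c)) * A2)
    = - (1 / (2 * c)) * ((real m * real d + 1) / (chebT m q - 1)) *
      ((a * (real m * real d) / (6 * c) - real d * (real m * real d) + (real d)^2) * U1
       + (2 * c * real d / a + real d * (real m * real d) / 3) * (chebV (m - 1) q - 1))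
    + real d / a + real d * (real m * real d) * (real m * real d + 1) / (6 * c)
    - ((real d)^2 - 1) * (real m * real d) / (12 * c)"
    unfolding Z0v Z1v A1_def A2_def using FA apos cpos dpos by simp
  show ?thesis
    unfolding n_def K0 trM sX U1_def[symmetric]
    using FA' by (simp add: algebra_simps)
qed


end
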